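(* Let $L_B$ be the weighted Laplacian of a connected undirected graph on $N$ nodes with positive edge weights, with eigenvalues $0=\lambda_1^B<\lambda_2^B\le\cdots\le\lambda_N^B$. Let $k_P,\tau_P,k_Q,\tau_Q>0$, $\bar b\ge 0$, $c_Q=1+2k_Q\bar b$, and $\alpha>0$. Consider the linear time-invariant system $H$ with state $\psi=(\delta,\omega,V)\in\mathbb{R}^{3N}$, input $\mathrm{w}\in\mathbb{R}^{2N}$ and output $y\in\mathbb{R}^{2N}$: $$\dot\psi=\begin{bmatrix}0 & I & 0\\ -\frac{k_P}{\tau_P}L_B & -\frac{1}{\tau_P}I & 0\\ 0 & 0 & -\frac{c_Q}{\tau_Q}I-\frac{k_Q}{\tau_Q}L_B\end{bmatrix}\psi+\begin{bmatrix}0&0\\ \frac{1}{\tau_P}I & 0\\ 0 & \frac{1}{\tau_Q}I\end{bmatrix}\mathrm{w},\qquad y=\begin{bmatrix}\sqrt{\alpha}L_B^{1/2} & 0 & 0\\ 0&0&\sqrt{\alpha}L_B^{1/2}\end{bmatrix}\psi .$$ Then the squared $\mathcal{H}_2$ norm of $H$ is $$\|H\|_2^2=\frac{\alpha}{2k_P}(N-1)+\frac{\alpha}{2\tau_Q}\sum_{n=2}^N\frac{1}{\frac{c_Q}{\lambda_n^B}+k_Q}.$$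
   Context: $I$ is the $N\times N$ identity and $L_B^{1/2}$ is the unique positive semidefinite square root of $L_B$. The system matrix has a single zero eigenvalue (mode $\delta\propto\mathbf{1}$), which is unobservable from $y$; all other modes are stable, so the $\mathcal{H}_2$ norm of the transfer function $C(sI-A)^{-1}B$ is finite; $\|H\|_2^2$ equals the steady-state output variance $\lim_{t\to\infty}\mathbb{E}[y^*(t)y(t)]$ under unit-covariance white noise input. Interpretation: $y^*y=\delta^TL_G\delta+V^TL_GV$ with $L_G=\alpha L_B$ the conductance Laplacian (uniform resistance-to-reactance ratio $\alpha$), approximating instantaneous transient power losses. *)

theory Defs
  imports "HOL-Analysis.Analysis" "HOL-Library.Numeral_Type"
begin

definition matpow :: "real^'n^'n \<Rightarrow> nat \<Rightarrow> real^'n^'n" where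
  "matpow M k = ((\<lambda>X. X ** M) ^^ k) (mat 1)"

definition mexp :: "real^'n^'n \<Rightarrow> real^'n^'n" where
  "mexp M = (\<Sum>k. (1 / fact k) *\<^sub>R matpow M k)"

definition frob_sq :: "real^'c^'r \<Rightarrow> real" where
  "frob_sq M = (\<Sum>i\<in>UNIV. \<Sum>j\<in>UNIV. (M $ i $ j)^2)"

text \<open>Squared H2 norm of the LTI system (A,B,C) with transfer function C (sI-A)^{-1} B:
  the integral over [0,oo) of the squared Frobenius norm of the impulse response
  C e^{At} B.  We state that this (improper, nonnegative) integral exists and has value v.\<close>
definition has_h2_norm_sq :: "real^'s^'s \<Rightarrow> real^'i^'s \<Rightarrow> real^'s^'o \<Rightarrow> real \<Rightarrow> bool" where
  "has_h2_norm_sq A B C v \<longleftrightarrow>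
     ((\<lambda>t. frob_sq (C ** mexp (t *\<^sub>R A) ** B)) has_integral v) {0..}"

definition laplacian :: "('n::finite \<Rightarrow> 'n \<Rightarrow> real) \<Rightarrow> real^'n^'n" where
  "laplacian w = (\<chi> i j. if i = j then (\<Sum>k\<in>UNIV - {i}. w i k) else - w i j)"

definition psd :: "real^'n^'n \<Rightarrow> bool" where
  "psd M \<longleftrightarrow> transpose M = M \<and> (\<forall>x. 0 \<le> x \<bullet> (M *v x))"

definition psd_sqrt :: "real^'n^'n \<Rightarrow> real^'n^'n" where
  "psd_sqrt M = (THE S. psd S \<and> S ** S = M)"

definition block3 :: "(3 \<Rightarrow> 3 \<Rightarrow> real^'n^'n) \<Rightarrow> real^('n \<times> 3)^('n \<times> 3)" where
  "block3 M = (\<chi> p q. M (snd p) (snd q) $ fst p $ fst q)"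

definition block32 :: "(3 \<Rightarrow> 2 \<Rightarrow> real^'n^'n) \<Rightarrow> real^('n \<times> 2)^('n \<times> 3)" where
  "block32 M = (\<chi> p q. M (snd p) (snd q) $ fst p $ fst q)"

definition block23 :: "(2 \<Rightarrow> 3 \<Rightarrow> real^'n^'n) \<Rightarrow> real^('n \<times> 3)^('n \<times> 2)" where
  "block23 M = (\<chi> p q. M (snd p) (snd q) $ fst p $ fst q)"

definition sysA :: "real^'n^'n \<Rightarrow> real \<Rightarrow> real \<Rightarrow> real \<Rightarrow> real \<Rightarrow> real \<Rightarrow> real^('n \<times> 3)^('n \<times> 3)" where
  "sysA L kP tauP kQ tauQ cQ = block3 (\<lambda>a b.
     if a = 0 \<and> b = 1 then mat 1
     else if a = 1 \<and> b = 0 then - (kP / tauP) *\<^sub>R L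
     else if a = 1 \<and> b = 1 then - (1 / tauP) *\<^sub>R mat 1
     else if a = 2 \<and> b = 2 then - (cQ / tauQ) *\<^sub>R mat 1 - (kQ / tauQ) *\<^sub>R L
     else 0)"

definition sysB :: "real \<Rightarrow> real \<Rightarrow> real^('n::finite \<times> 2)^('n \<times> 3)" where
  "sysB tauP tauQ = block32 (\<lambda>a b.
     if a = 1 \<and> b = 0 then (1 / tauP) *\<^sub>R mat 1
     else if a = 2 \<and> b = 1 then (1 / tauQ) *\<^sub>R mat 1
     else 0)"

definition sysC :: "real^'n^'n \<Rightarrow> real \<Rightarrow> real^('n \<times> 3)^('n \<times> 2)" where
  "sysC L \<alpha> = block23 (\<lambda>a b.
     if a = 0 \<and> b = 0 then sqrt \<alpha> *\<^sub>R psd_sqrt L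
     else if a = 1 \<and> b = 2 then sqrt \<alpha> *\<^sub>R psd_sqrt L
     else 0)"

end

theory Submission
  imports Defs "HOL-Real_Asymp.Real_Asymp"
begin

lemma matpow_0[simp]: "matpow M 0 = mat 1"
  by (simp add: matpow_def)

lemma matpow_Suc: "matpow M (Suc k) = matpow M k ** M"
  by (simp add: matpow_def)

lemma matpow_Suc': "matpow M (Suc k) = M ** matpow M k"
proof (induction k)
  case 0 then show ?case by (simp add: matpow_Suc)
next
  case (Suc k)
  have "matpow M (Suc (Suc k)) = (M ** matpow M k) ** M"
    using Suc by (simp add: matpow_Suc)
  also have "\<dots> = M ** matpow M (Suc k)" by (simp add: matrix_mul_assoc matpow_Suc)
  finally show ?case .
qed

lemma matpow_scale: "matpow (t *\<^sub>R M) k = (t^k) *\<^sub>R matpow M k"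
  by (induction k) (simp_all add: matpow_Suc matrix_scalar_ac scalar_matrix_assoc[symmetric])

lemma matpow_bound:
  fixes M :: "real^'n^'n"
  shows "\<bar>matpow M k $ p $ q\<bar> \<le> (\<Sum>r\<in>UNIV. \<Sum>s\<in>UNIV. \<bar>M $ r $ s\<bar>) ^ k"
proof (induction k arbitrary: p q)
  case 0 then show ?case by (simp add: mat_def)
next
  case (Suc k)
  define R where "R = (\<Sum>r\<in>UNIV. \<Sum>s\<in>UNIV. \<bar>M $ r $ s\<bar>)"
  have R0: "0 \<le> R" unfolding R_def by (simp add: sum_nonneg)
  have "\<bar>matpow M (Suc k) $ p $ q\<bar> = \<bar>\<Sum>r\<in>UNIV. matpow M k $ p $ r * M $ r $ q\<bar>"
    by (simp add: matpow_Suc matrix_matrix_mult_def)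
  also have "\<dots> \<le> (\<Sum>r\<in>UNIV. \<bar>matpow M k $ p $ r\<bar> * \<bar>M $ r $ q\<bar>)"
    by (rule order_trans[OF sum_abs]) (simp add: abs_mult)
  also have "\<dots> \<le> (\<Sum>r\<in>UNIV. R^k * \<bar>M $ r $ q\<bar>)"
    by (rule sum_mono, rule mult_right_mono) (use Suc in \<open>auto simp: R_def\<close>)
  also have "\<dots> = R^k * (\<Sum>r\<in>UNIV. \<bar>M $ r $ q\<bar>)" by (simp add: sum_distrib_left)
  also have "\<dots> \<le> R^k * R"
  proof (rule mult_left_mono)
    have "(\<Sum>r\<in>UNIV. \<bar>M $ r $ q\<bar>) \<le> (\<Sum>r\<in>UNIV. \<Sum>s\<in>UNIV. \<bar>M $ r $ s\<bar>)"
      by (rule sum_mono) (rule member_le_sum, auto)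
    then show "(\<Sum>r\<in>UNIV. \<bar>M $ r $ q\<bar>) \<le> R" by (simp add: R_def)
  qed (use R0 in auto)
  finally show ?case by (simp add: R_def mult.commute)
qed

definition ent :: "real^'n^'n \<Rightarrow> 'n \<Rightarrow> 'n \<Rightarrow> real \<Rightarrow> real" where
  "ent M p q t = (\<Sum>k. (matpow M k $ p $ q / fact k) * t ^ k)"

lemma summable_ent:
  fixes M :: "real^'n^'n"
  shows "summable (\<lambda>k. (matpow M k $ p $ q / fact k) * t ^ k)"
proof -
  define R where "R = (\<Sum>r\<in>UNIV. \<Sum>s\<in>UNIV. \<bar>M $ r $ s\<bar>)"
  have "summable (\<lambda>k. (R * \<bar>t\<bar>) ^ k / fact k)"
    using summable_exp[of "R * \<bar>t\<bar>"] by (simp add: divide_inverse mult.commute)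
  then show ?thesis
  proof (rule summable_comparison_test'[where N=0])
    fix k :: nat
    have "norm ((matpow M k $ p $ q / fact k) * t ^ k) = \<bar>matpow M k $ p $ q\<bar> * \<bar>t\<bar>^k / fact k"
      by (simp add: abs_mult power_abs)
    also have "\<dots> \<le> R^k * \<bar>t\<bar>^k / fact k"
      by (intro divide_right_mono mult_right_mono) (auto simp: R_def matpow_bound)
    finally show "norm ((matpow M k $ p $ q / fact k) * t ^ k) \<le> (R * \<bar>t\<bar>) ^ k / fact k"
      by (simp add: power_mult_distrib)
  qed
qed

lemma mexp_sums:
  fixes M :: "real^'n^'n"
  shows "(\<lambda>k. (1 / fact k) *\<^sub>R matpow (t *\<^sub>R M) k) sums (\<chi> p q. ent M p q t)"
  unfolding sums_def
proof (rule vec_tendstoI, rule vec_tendstoI)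
  fix p q
  have "(\<lambda>k. (matpow M k $ p $ q / fact k) * t ^ k) sums ent M p q t"
    unfolding ent_def using summable_ent by (rule summable_sums)
  then show "((\<lambda>n. (\<Sum>k<n. (1 / fact k) *\<^sub>R matpow (t *\<^sub>R M) k) $ p $ q) \<longlongrightarrow> (\<chi> p q. ent M p q t) $ p $ q) sequentially"
    by (simp add: sums_def matpow_scale mult.commute)
qed

lemma mexp_eq: "mexp (t *\<^sub>R M) = (\<chi> p q. ent M p q t)"
  unfolding mexp_def by (rule sums_unique[symmetric]) (rule mexp_sums)

lemma mexp_ent: "mexp (t *\<^sub>R M) $ p $ q = ent M p q t"
  by (simp add: mexp_eq)

lemma ent_0: "ent M p q 0 = mat 1 $ p $ q"
proof -
  have "(\<lambda>k. (matpow M k $ p $ q / fact k) * 0 ^ k) sums (matpow M 0 $ p $ q / fact 0)"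
    using powser_sums_zero[of "\<lambda>k. matpow M k $ p $ q / fact k"] by simp
  then show ?thesis unfolding ent_def by (simp add: sums_iff)
qed

lemma ent_deriv:
  fixes M :: "real^'n^'n"
  shows "((\<lambda>t. ent M p q t) has_real_derivative (\<Sum>r\<in>UNIV. M $ p $ r * ent M r q t)) (at t)"
proof -
  let ?c = "\<lambda>k. matpow M k $ p $ q / fact k"
  have D: "((\<lambda>t. \<Sum>k. ?c k * t ^ k) has_field_derivative (\<Sum>k. diffs ?c k * t ^ k)) (at t)"
    by (rule termdiffs_strong_converges_everywhere) (rule summable_ent)
  have "diffs ?c k * t ^ k = (\<Sum>r\<in>UNIV. M $ p $ r * ((matpow M k $ r $ q / fact k) * t ^ k))" for k
  proof -
    have "diffs ?c k = matpow M (Suc k) $ p $ q / fact k"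
    proof -
      have "diffs ?c k = of_nat (Suc k) * (matpow M (Suc k) $ p $ q / (of_nat (Suc k) * fact k))"
        by (simp add: diffs_def del: of_nat_Suc)
      also have "\<dots> = matpow M (Suc k) $ p $ q / fact k"
        by (simp del: of_nat_Suc)
      finally show ?thesis .
    qed
    also have "\<dots> = (\<Sum>r\<in>UNIV. M $ p $ r * matpow M k $ r $ q) / fact k"
      by (simp add: matpow_Suc' matrix_matrix_mult_def)
    finally show ?thesis by (simp add: sum_distrib_left sum_distrib_right sum_divide_distrib algebra_simps)
  qed
  then have "(\<Sum>k. diffs ?c k * t ^ k) = (\<Sum>k. \<Sum>r\<in>UNIV. M $ p $ r * ((matpow M k $ r $ q / fact k) * t ^ k))"
    by simp
  also have "\<dots> = (\<Sum>r\<in>UNIV. \<Sum>k. M $ p $ r * ((matpow M k $ r $ q / fact k) * t ^ k))"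
    by (rule suminf_sum) (intro summable_mult summable_ent)
  also have "\<dots> = (\<Sum>r\<in>UNIV. M $ p $ r * ent M r q t)"
    unfolding ent_def by (intro sum.cong refl suminf_mult summable_ent)
  finally show ?thesis using D unfolding ent_def by simp
qed

definition traj :: "real^'n^'n \<Rightarrow> real^'n \<Rightarrow> real \<Rightarrow> real^'n" where
  "traj M x0 t = mexp (t *\<^sub>R M) *v x0"

lemma traj_comp: "traj M x0 t $ p = (\<Sum>q\<in>UNIV. ent M p q t * x0 $ q)"
  by (simp add: traj_def matrix_vector_mult_def mexp_ent)

lemma traj_0: "traj M x0 0 = x0"
proof -
  have "mexp (0 *\<^sub>R M) = mat 1" using mexp_eq[of 0 M] by (simp add: ent_0 vec_eq_iff)
  then show ?thesis by (simp add: traj_def)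
qed

lemma traj_deriv:
  fixes M :: "real^'n^'n"
  shows "((\<lambda>t. traj M x0 t $ p) has_real_derivative (M *v traj M x0 t) $ p) (at t)"
proof -
  have "((\<lambda>t. \<Sum>q\<in>UNIV. ent M p q t * x0 $ q) has_real_derivative
          (\<Sum>q\<in>UNIV. (\<Sum>r\<in>UNIV. M $ p $ r * ent M r q t) * x0 $ q)) (at t)"
    by (intro DERIV_sum DERIV_cmult_right ent_deriv)
  moreover have "(\<Sum>q\<in>UNIV. (\<Sum>r\<in>UNIV. M $ p $ r * ent M r q t) * x0 $ q) = (M *v traj M x0 t) $ p"
    by (simp add: matrix_vector_mult_def traj_comp sum_distrib_left sum_distrib_right mult.assoc)
       (rule sum.swap)
  ultimately show ?thesis by (simp add: traj_comp)
qed

lemma lyap_integral: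
  fixes q h :: "real \<Rightarrow> real"
  assumes der: "\<And>t. (q has_real_derivative - h t) (at t)"
    and nn: "\<And>t. 0 \<le> t \<Longrightarrow> 0 \<le> h t"
    and lim: "(q \<longlongrightarrow> 0) at_top"
  shows "(h has_integral q 0) {0..}"
proof -
  define f where "f = (\<lambda>k::nat. \<lambda>x. if x \<in> {0..real k} then h x else 0)"
  have int: "(f k has_integral (q 0 - q (real k))) {0..}" for k
  proof -
    have "((\<lambda>t. - q t) has_real_derivative h t) (at t)" for t
      using DERIV_minus[OF der[of t]] by simp
    then have "(h has_integral ((- q (real k)) - (- q 0))) {0..real k}"
      by (intro fundamental_theorem_of_calculus)
         (auto simp: has_real_derivative_iff_has_vector_derivative[symmetric] intro: has_field_derivative_at_within)
    then have "(h has_integral (q 0 - q (real k))) {0..real k}" by simp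
    then show ?thesis unfolding f_def
      by (subst has_integral_restrict) auto
  qed
  show ?thesis
  proof (rule has_integral_monotone_convergence_increasing[OF int])
    show "f k x \<le> f (Suc k) x" if "x \<in> {0..}" for k x
      using that nn by (auto simp: f_def)
    show "(\<lambda>k. f k x) \<longlonglongrightarrow> h x" if "x \<in> {0..}" for x
    proof (rule tendsto_eventually)
      obtain N where N: "x \<le> real N" using real_arch_simple[of x] by blast
      have "eventually (\<lambda>k. x \<le> real k) sequentially"
        unfolding eventually_sequentially by (rule exI[of _ N]) (use N in auto)
      then show "eventually (\<lambda>k. f k x = h x) sequentially"
        by eventually_elim (use that in \<open>auto simp: f_def\<close>)
    qed
    have "((\<lambda>k. q (real k)) \<longlongrightarrow> 0) sequentially"
      by (rule filterlim_compose[OF lim filterlim_real_sequentially])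
    then show "(\<lambda>k. q 0 - q (real k)) \<longlonglongrightarrow> q 0"
      using tendsto_diff[OF tendsto_const[of "q 0"]] by fastforce
  qed
qed

lemma decay_bound:
  fixes E :: "real \<Rightarrow> real" and E' :: "real \<Rightarrow> real"
  assumes der: "\<And>t. (E has_real_derivative E' t) (at t)"
    and le: "\<And>t. E' t \<le> - \<gamma> * E t"
    and t: "0 \<le> t"
  shows "E t \<le> E 0 * exp (- \<gamma> * t)"
proof -
  define G where "G = (\<lambda>t. E t * exp (\<gamma> * t))"
  have "G t \<le> G 0"
  proof (rule DERIV_nonpos_imp_nonincreasing[OF t])
    fix x
    have "(G has_real_derivative (E' x * exp (\<gamma> * x) + E x * (exp (\<gamma> * x) * \<gamma>))) (at x)"
      unfolding G_def by (auto intro!: derivative_eq_intros der)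
    moreover have "E' x * exp (\<gamma> * x) + E x * (exp (\<gamma> * x) * \<gamma>) \<le> 0"
    proof -
      have "E' x * exp (\<gamma> * x) + E x * (exp (\<gamma> * x) * \<gamma>) = (E' x + \<gamma> * E x) * exp (\<gamma> * x)"
        by (simp add: algebra_simps)
      also have "\<dots> \<le> 0" using le[of x] by (intro mult_nonpos_nonneg) auto
      finally show ?thesis .
    qed
    ultimately show "\<exists>y. (G has_real_derivative y) (at x) \<and> y \<le> 0" by blast
  qed
  then have "E t * exp (\<gamma> * t) \<le> E 0" by (simp add: G_def)
  then have "E t * exp (\<gamma> * t) * exp (- \<gamma> * t) \<le> E 0 * exp (- \<gamma> * t)"
    by (intro mult_right_mono) auto
  then show ?thesis by (simp add: mult.assoc flip: exp_add)
qed

lemma scalar1_integral: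
  fixes V :: "real \<Rightarrow> real"
  assumes der: "\<And>t. (V has_real_derivative - \<beta> * V t) (at t)"
    and b: "0 < \<beta>"
  shows "((\<lambda>t. V t ^ 2) has_integral (V 0 ^ 2 / (2 * \<beta>))) {0..}"
proof -
  define q where "q = (\<lambda>t. V t ^ 2 / (2 * \<beta>))"
  have dq: "(q has_real_derivative - (V t ^ 2)) (at t)" for t
  proof -
    have "(q has_real_derivative (2 * V t * (- \<beta> * V t)) / (2 * \<beta>)) (at t)"
      unfolding q_def by (auto intro!: derivative_eq_intros der)
    then show ?thesis using b by (simp add: power2_eq_square field_simps)
  qed
  have D0: "\<forall>x. ((\<lambda>t. V t * exp (\<beta> * t)) has_real_derivative 0) (at x)"
  proof
    fix x
    have "((\<lambda>t. V t * exp (\<beta> * t)) has_real_derivative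
        (- \<beta> * V x) * exp (\<beta> * x) + V x * (exp (\<beta> * x) * \<beta>)) (at x)"
      by (auto intro!: derivative_eq_intros der)
    then show "((\<lambda>t. V t * exp (\<beta> * t)) has_real_derivative 0) (at x)"
      by (simp add: algebra_simps)
  qed
  have "\<forall>t. V t * exp (\<beta> * t) = V 0 * exp (\<beta> * 0)"
    using DERIV_isconst_all[OF D0] by blast
  then have Vt: "V t = V 0 * exp (- \<beta> * t)" for t
    by (metis (no_types, opaque_lifting) exp_minus_inverse mult.assoc mult.commute mult.right_neutral mult_minus_left mult_zero_right exp_zero)
  have e0: "((\<lambda>t. exp (- \<beta> * t)) \<longlongrightarrow> 0) at_top"
    using b by real_asymp
  have "((\<lambda>t. (V 0 * exp (- \<beta> * t))^2 / (2 * \<beta>)) \<longlongrightarrow> (V 0 * 0)^2 / (2 * \<beta>)) at_top"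
    using b by (intro tendsto_intros e0) auto
  then have "((\<lambda>t. (V 0 * exp (- \<beta> * t))^2 / (2 * \<beta>)) \<longlongrightarrow> 0) at_top" by simp
  moreover have "q = (\<lambda>t. (V 0 * exp (- \<beta> * t))^2 / (2 * \<beta>))"
  proof
    fix t show "q t = (V 0 * exp (- \<beta> * t))^2 / (2 * \<beta>)"
      using Vt[of t] by (simp add: q_def)
  qed
  ultimately have "(q \<longlongrightarrow> 0) at_top" by simp
  then have "((\<lambda>t. V t ^ 2) has_integral q 0) {0..}"
    by (intro lyap_integral[OF dq]) auto
  then show ?thesis by (simp add: q_def)
qed

lemma scalar2_integral:
  fixes d w :: "real \<Rightarrow> real" and a b l :: real
  assumes dd: "\<And>t. (d has_real_derivative w t) (at t)"
    and dw: "\<And>t. (w has_real_derivative (- a * l * d t - b * w t)) (at t)"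
    and a: "0 < a" and b: "0 < b" and l: "0 < l"
  shows "((\<lambda>t. l * d t ^ 2) has_integral
           ((l / (2*b) + b / (2*a)) * d 0 ^ 2 + 2 * (1 / (2*a)) * d 0 * w 0 + (1 / (2*a*b)) * w 0 ^ 2)) {0..}"
proof -
  define xx where "xx = l / (2*b) + b / (2*a)"
  define yy where "yy = 1 / (2*a)"
  define zz where "zz = 1 / (2*a*b)"
  define q where "q = (\<lambda>t. xx * d t ^ 2 + 2 * yy * d t * w t + zz * w t ^ 2)"
  have dq: "(q has_real_derivative - (l * d t ^ 2)) (at t)" for t
  proof -
    have "(q has_real_derivative
        xx * (2 * d t * w t) + 2 * yy * (w t * w t + d t * (- a * l * d t - b * w t))
        + zz * (2 * w t * (- a * l * d t - b * w t))) (at t)"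
      unfolding q_def
      by (rule derivative_eq_intros dd dw refl | simp)+ (simp add: algebra_simps power2_eq_square)
    moreover have "xx * (2 * d t * w t) + 2 * yy * (w t * w t + d t * (- a * l * d t - b * w t))
        + zz * (2 * w t * (- a * l * d t - b * w t)) = - (l * d t ^ 2)"
      using a b unfolding xx_def yy_def zz_def by (simp add: field_simps power2_eq_square)
    ultimately show ?thesis by simp
  qed
  define E where "E = (\<lambda>t. a * l * d t ^ 2 + w t ^ 2 + b * d t * w t + b^2 / 2 * d t ^ 2)"
  define E' where "E' = (\<lambda>t. - b * (a * l * d t ^ 2 + w t ^ 2))"
  have dE: "(E has_real_derivative E' t) (at t)" for t
  proof -
    have "(E has_real_derivative
        a * l * (2 * d t * w t) + 2 * w t * (- a * l * d t - b * w t)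
        + b * (w t * w t + d t * (- a * l * d t - b * w t)) + b^2 / 2 * (2 * d t * w t)) (at t)"
      unfolding E_def
      by (rule derivative_eq_intros dd dw refl | simp)+ (simp add: algebra_simps power2_eq_square)
    moreover have "a * l * (2 * d t * w t) + 2 * w t * (- a * l * d t - b * w t)
        + b * (w t * w t + d t * (- a * l * d t - b * w t)) + b^2 / 2 * (2 * d t * w t) = E' t"
      unfolding E'_def by (simp add: algebra_simps power2_eq_square)
    ultimately show ?thesis by simp
  qed
  define K where "K = 2 + 3 * b^2 / (4 * a * l)"
  have K0: "0 < K" unfolding K_def using a b l by (auto intro!: add_pos_nonneg)
  have EK: "E t \<le> K * (a * l * d t ^ 2 + w t ^ 2)" for t
  proof -
    have h1: "b * d t * w t \<le> w t ^ 2 + b^2 * d t ^ 2 / 4"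
      using zero_le_power2[of "w t - b * d t / 2"] by (simp add: power2_eq_square algebra_simps)
    have h2: "K * (a * l * d t ^ 2 + w t ^ 2) = 2 * a * l * d t ^ 2 + 3 * b^2/4 * d t ^ 2 + K * w t ^ 2"
      unfolding K_def using a l by (simp add: field_simps)
    have h3: "2 * w t ^ 2 \<le> K * w t ^ 2"
      by (rule mult_right_mono) (auto simp: K_def intro!: divide_nonneg_pos mult_pos_pos a l)
    have h4: "0 \<le> a * l * d t ^ 2" using a l by simp
    show ?thesis unfolding E_def using h1 h2 h3 h4 by linarith
  qed
  define \<gamma> where "\<gamma> = b / K"
  have Ele: "E' t \<le> - \<gamma> * E t" for t
  proof -
    have "\<gamma> * E t \<le> \<gamma> * (K * (a * l * d t ^ 2 + w t ^ 2))"
      using EK[of t] b K0 by (intro mult_left_mono) (auto simp: \<gamma>_def)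
    also have "\<dots> = b * (a * l * d t ^ 2 + w t ^ 2)" using K0 by (simp add: \<gamma>_def)
    finally show ?thesis by (simp add: E'_def)
  qed
  have Edec: "E t \<le> E 0 * exp (- \<gamma> * t)" if "0 \<le> t" for t
    using decay_bound[OF dE Ele that] .
  have Elow1: "a * l * d t ^ 2 \<le> E t" for t
  proof -
    have "E t - a * l * d t ^ 2 = (w t + b * d t / 2)^2 + b^2 / 4 * d t ^ 2"
      unfolding E_def by (simp add: power2_eq_square algebra_simps)
    then show ?thesis by (smt (verit) zero_le_power2 mult_nonneg_nonneg zero_le_divide_iff)
  qed
  have Elow2: "w t ^ 2 \<le> 2 * E t" for t
  proof -
    have "E t - a * l * d t ^ 2 = (w t + b * d t / 2)^2 + b^2 / 4 * d t ^ 2"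
      unfolding E_def by (simp add: power2_eq_square algebra_simps)
    moreover have "w t ^ 2 \<le> 2 * (w t + b * d t / 2)^2 + 2 * (b^2 / 4 * d t ^ 2)"
      using zero_le_power2[of "w t + b * d t"] by (simp add: power2_eq_square algebra_simps)
    moreover have "0 \<le> a * l * d t ^ 2" using a l by simp
    ultimately show ?thesis by linarith
  qed
  define C where "C = (xx + yy) / (a * l) + 2 * (yy + zz)"
  have xx0: "0 \<le> xx" and yy0: "0 \<le> yy" and zz0: "0 \<le> zz"
    unfolding xx_def yy_def zz_def using a b l by auto
  have qle: "\<bar>q t\<bar> \<le> C * E t" for t
  proof -
    have c1: "\<bar>2 * yy * d t * w t\<bar> \<le> yy * (d t ^ 2 + w t ^ 2)"
    proof -
      have "\<bar>2 * d t * w t\<bar> \<le> d t ^ 2 + w t ^ 2"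
        using zero_le_power2[of "d t - w t"] zero_le_power2[of "d t + w t"]
        by (auto simp: abs_le_iff power2_eq_square algebra_simps)
      then have "yy * \<bar>2 * d t * w t\<bar> \<le> yy * (d t ^ 2 + w t ^ 2)"
        using yy0 by (intro mult_left_mono)
      then show ?thesis using yy0 by (simp add: abs_mult mult.assoc)
    qed
    have "\<bar>q t\<bar> \<le> xx * d t ^ 2 + \<bar>2 * yy * d t * w t\<bar> + zz * w t ^ 2"
    proof -
      have n1: "0 \<le> xx * d t ^ 2" using xx0 by simp
      have n2: "0 \<le> zz * w t ^ 2" using zz0 by simp
      show ?thesis unfolding q_def
        using n1 n2 abs_ge_self[of "2 * yy * d t * w t"] abs_ge_minus_self[of "2 * yy * d t * w t"]
        by (simp only: abs_le_iff) linarith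
    qed
    also have "\<dots> \<le> (xx + yy) * d t ^ 2 + (yy + zz) * w t ^ 2"
      using c1 by (simp add: algebra_simps)
    also have "\<dots> \<le> (xx + yy) * (E t / (a * l)) + (yy + zz) * (2 * E t)"
    proof (intro add_mono mult_left_mono)
      show "d t ^ 2 \<le> E t / (a * l)" using Elow1[of t] a l by (simp add: field_simps)
      show "w t ^ 2 \<le> 2 * E t" by (rule Elow2)
    qed (use xx0 yy0 zz0 in auto)
    also have "\<dots> = C * E t" by (simp add: C_def algebra_simps)
    finally show ?thesis .
  qed
  have C0: "0 \<le> C" unfolding C_def using xx0 yy0 zz0 a l by auto
  have g0: "0 < \<gamma>" unfolding \<gamma>_def using b K0 by simp
  have e0: "((\<lambda>t. exp (- \<gamma> * t)) \<longlongrightarrow> 0) at_top"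
    using g0 by real_asymp
  have "((\<lambda>t. C * (E 0 * exp (- \<gamma> * t))) \<longlongrightarrow> C * (E 0 * 0)) at_top"
    by (intro tendsto_intros e0)
  then have lim2: "((\<lambda>t. C * (E 0 * exp (- \<gamma> * t))) \<longlongrightarrow> 0) at_top" by simp
  have "(q \<longlongrightarrow> 0) at_top"
  proof (rule Lim_null_comparison[OF _ lim2])
    show "\<forall>\<^sub>F t in at_top. norm (q t) \<le> C * (E 0 * exp (- \<gamma> * t))"
      using eventually_ge_at_top[of "0::real"]
    proof eventually_elim
      case (elim t)
      have "norm (q t) \<le> C * E t" using qle by simp
      also have "\<dots> \<le> C * (E 0 * exp (- \<gamma> * t))"
        using Edec[OF elim] C0 by (rule mult_left_mono)
      finally show ?case .
    qed
  qed
  then have "((\<lambda>t. l * d t ^ 2) has_integral q 0) {0..}"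
    by (intro lyap_integral[OF dq]) (use l in auto)
  then show ?thesis by (simp add: q_def xx_def yy_def zz_def)
qed

lemma sym_dot:
  fixes L :: "real^'n^'n"
  assumes "transpose L = L"
  shows "x \<bullet> (L *v y) = (L *v x) \<bullet> y"
proof -
  have "x \<bullet> (L *v y) = (x v* L) \<bullet> y" by (simp add: dot_lmul_matrix)
  also have "x v* L = transpose L *v x" by (simp add: transpose_matrix_vector)
  finally show ?thesis using assms by simp
qed

lemma quad_zero:
  fixes \<beta> \<gamma> :: real
  assumes "\<And>t. t * \<beta> + t^2 * \<gamma> \<le> 0"
  shows "\<beta> = 0"
proof (rule ccontr)
  assume nz: "\<beta> \<noteq> 0"
  define c where "c = 2 * (\<bar>\<gamma>\<bar> + 1)"
  have c0: "0 < c" by (simp add: c_def add_nonneg_pos)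
  define t where "t = \<beta> / c"
  have A: "t * \<beta> + t^2 * \<gamma> \<ge> t * \<beta> - t^2 * \<bar>\<gamma>\<bar>"
    using abs_ge_minus_self[of \<gamma>] by (smt (verit) mult_left_mono zero_le_power2 mult_minus_right)
  have B: "t * \<beta> - t^2 * \<bar>\<gamma>\<bar> = \<beta>^2 / c * (1 - \<bar>\<gamma>\<bar> / c)"
    using c0 by (simp add: t_def power2_eq_square field_simps)
  have C: "\<beta>^2 / c * (1 - \<bar>\<gamma>\<bar> / c) > 0"
  proof (rule mult_pos_pos)
    show "0 < \<beta>^2 / c" using nz c0 by simp
    have "\<bar>\<gamma>\<bar> / c < 1" using c0 by (simp add: c_def field_simps)
    then show "0 < 1 - \<bar>\<gamma>\<bar> / c" by simp
  qed
  show False using A B C assms[of t] by linarith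
qed

lemma eig_extend:
  fixes L :: "real^'n^'n" and S :: "(real^'n) set"
  assumes sym: "transpose L = L"
    and fin: "finite S"
    and eig: "\<And>s. s \<in> S \<Longrightarrow> norm s = 1 \<and> (\<exists>\<mu>. L *v s = \<mu> *\<^sub>R s)"
    and card: "card S < CARD('n)"
  shows "\<exists>v. v \<notin> S \<and> norm v = 1 \<and> (\<exists>\<mu>. L *v v = \<mu> *\<^sub>R v) \<and> (\<forall>s\<in>S. orthogonal v s)"
proof -
  define W where "W = {x::real^'n. \<forall>s\<in>S. s \<bullet> x = 0}"
  have "dim S < DIM(real^'n)"
    using dim_le_card'[OF fin] card by simp
  then obtain x0 :: "real^'n" where x0: "x0 \<noteq> 0" "\<And>y. y \<in> span S \<Longrightarrow> orthogonal x0 y"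
    using orthogonal_to_subspace_exists by blast
  have x0W: "x0 \<in> W" unfolding W_def using x0(2) span_base
    by (fastforce simp: orthogonal_def inner_commute)
  define K where "K = sphere (0::real^'n) 1 \<inter> (\<Inter>s\<in>S. {x. s \<bullet> x = 0})"
  have Kc: "compact K" unfolding K_def
    by (intro compact_Int_closed compact_sphere closed_INT closed_hyperplane allI ballI)
  have KW: "K = {x. norm x = 1 \<and> x \<in> W}" unfolding K_def W_def by auto
  have Kne: "K \<noteq> {}"
  proof -
    have "x0 /\<^sub>R norm x0 \<in> K" using x0 x0W unfolding KW W_def
      by (auto simp: inner_scaleR_right)
    then show ?thesis by blast
  qed
  define Q where "Q = (\<lambda>x::real^'n. x \<bullet> (L *v x))"
  have Qc: "continuous_on K Q" unfolding Q_def
    by (intro continuous_intros matrix_vector_mult_linear_continuous_on[THEN continuous_on_compose2[where g="(*v) L"]]) auto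
  obtain v where vK: "v \<in> K" and vmax: "\<And>y. y \<in> K \<Longrightarrow> Q y \<le> Q v"
    using continuous_attains_sup[OF Kc Kne Qc] by blast
  have v1: "norm v = 1" and vW: "v \<in> W" using vK KW by auto
  define m where "m = Q v"
  have vv: "v \<bullet> v = 1" using v1 by (simp add: dot_square_norm)
  have Wsub: "x + y \<in> W" "c *\<^sub>R x \<in> W" if "x \<in> W" "y \<in> W" for x y c
    using that by (auto simp: W_def inner_add_right inner_scaleR_right)
  have key: "h \<bullet> (L *v v - m *\<^sub>R v) = 0" if hW: "h \<in> W" for h
  proof -
    have ineq: "Q (v + t *\<^sub>R h) \<le> m * (norm (v + t *\<^sub>R h))^2" for t
    proof (cases "v + t *\<^sub>R h = 0")
      case True then show ?thesis by (simp add: Q_def)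
    next
      case False
      define y where "y = (v + t *\<^sub>R h) /\<^sub>R norm (v + t *\<^sub>R h)"
      have "v + t *\<^sub>R h \<in> W" using Wsub vW hW by blast
      then have "y \<in> K" using False unfolding KW y_def by (auto intro: Wsub)
      then have "Q y \<le> m" using vmax m_def by blast
      moreover have "Q y = Q (v + t *\<^sub>R h) / (norm (v + t *\<^sub>R h))^2"
        unfolding Q_def y_def by (simp add: matrix_vector_mult_scaleR inner_scaleR_left inner_scaleR_right power2_eq_square divide_inverse ac_simps)
      ultimately show ?thesis using False by (simp add: field_simps)
    qed
    have "t * (2 * (h \<bullet> (L *v v) - m * (h \<bullet> v))) + t^2 * (Q h - m * (h \<bullet> h)) \<le> 0" for t
    proof -
      have e1: "Q (v + t *\<^sub>R h) = Q v + t * (2 * (h \<bullet> (L *v v))) + t^2 * Q h"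
      proof -
        have "v \<bullet> (L *v h) = h \<bullet> (L *v v)" using sym_dot[OF sym, of v h] by (simp add: inner_commute)
        then show ?thesis unfolding Q_def
          by (simp add: matrix_vector_right_distrib matrix_vector_mult_scaleR inner_add_left inner_add_right
                inner_scaleR_left inner_scaleR_right power2_eq_square algebra_simps)
      qed
      have e2: "(norm (v + t *\<^sub>R h))^2 = 1 + t * (2 * (h \<bullet> v)) + t^2 * (h \<bullet> h)"
        using vv unfolding power2_norm_eq_inner by (simp add: inner_add_left inner_add_right
                inner_scaleR_left inner_scaleR_right power2_eq_square inner_commute algebra_simps)
      show ?thesis using ineq[of t] unfolding e1 e2 m_def[symmetric] by (simp add: algebra_simps)
    qed
    then have "2 * (h \<bullet> (L *v v) - m * (h \<bullet> v)) = 0" by (rule quad_zero)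
    then show ?thesis by (simp add: inner_diff_right inner_scaleR_right)
  qed
  have rW: "L *v v - m *\<^sub>R v \<in> W"
    unfolding W_def mem_Collect_eq
  proof
    fix s assume sS: "s \<in> S"
    obtain \<mu> where mu: "L *v s = \<mu> *\<^sub>R s" using eig[OF sS] by blast
    have sv: "s \<bullet> v = 0" using vW sS by (auto simp: W_def)
    have "s \<bullet> (L *v v) = (L *v s) \<bullet> v" by (rule sym_dot[OF sym])
    also have "\<dots> = 0" using sv by (simp add: mu inner_scaleR_left)
    finally show "s \<bullet> (L *v v - m *\<^sub>R v) = 0" using sv by (simp add: inner_diff_right inner_scaleR_right)
  qed
  have "L *v v = m *\<^sub>R v" using key[OF rW] by simp
  moreover have "v \<notin> S"
  proof
    assume "v \<in> S" then have "v \<bullet> v = 0" using vW by (auto simp: W_def)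
    then show False using vv by simp
  qed
  moreover have "\<forall>s\<in>S. orthogonal v s" using vW by (auto simp: W_def orthogonal_def inner_commute)
  ultimately show ?thesis using v1 by blast
qed

lemma eig_sets:
  fixes L :: "real^'n^'n"
  assumes sym: "transpose L = L"
  shows "k \<le> CARD('n) \<Longrightarrow> \<exists>S. finite S \<and> card S = k \<and> pairwise orthogonal S \<and>
           (\<forall>s\<in>S. norm s = 1 \<and> (\<exists>\<mu>. L *v s = \<mu> *\<^sub>R s))"
proof (induction k)
  case 0 then show ?case by (intro exI[of _ "{}"]) auto
next
  case (Suc k)
  then obtain S where S: "finite S" "card S = k" "pairwise orthogonal S"
      "\<forall>s\<in>S. norm s = 1 \<and> (\<exists>\<mu>. L *v s = \<mu> *\<^sub>R s)" by auto
  obtain v where v: "v \<notin> S" "norm v = 1" "\<exists>\<mu>. L *v v = \<mu> *\<^sub>R v" "\<forall>s\<in>S. orthogonal v s"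
    using eig_extend[OF sym S(1)] S Suc.prems by auto
  show ?case
    by (rule exI[of _ "insert v S"]) (use S v in \<open>auto intro: pairwise_orthogonal_insert\<close>)
qed

lemma spectral:
  fixes L :: "real^'n^'n"
  assumes sym: "transpose L = L"
  shows "\<exists>(u::'n \<Rightarrow> real^'n) d. (\<forall>i j. u i \<bullet> u j = (if i = j then 1 else 0)) \<and> (\<forall>i. L *v u i = d i *\<^sub>R u i)"
proof -
  obtain S where S: "finite S" "card S = CARD('n)" "pairwise orthogonal S"
      "\<forall>s\<in>S. norm s = 1 \<and> (\<exists>\<mu>. L *v s = \<mu> *\<^sub>R s)"
    using eig_sets[OF sym, of "CARD('n)"] by auto
  obtain h where h: "bij_betw h (UNIV::'n set) S"
    using finite_same_card_bij[of "UNIV::'n set" S] S by auto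
  have hS: "h i \<in> S" for i using h by (auto simp: bij_betw_def)
  have "\<forall>i. \<exists>\<mu>. L *v h i = \<mu> *\<^sub>R h i" using S(4) hS by blast
  then obtain d where d: "\<forall>i. L *v h i = d i *\<^sub>R h i" by metis
  have "h i \<bullet> h j = (if i = j then 1 else 0)" for i j
  proof (cases "i = j")
    case True then show ?thesis using S(4) hS by (simp add: dot_square_norm)
  next
    case False
    then have "h i \<noteq> h j" using h by (auto simp: bij_betw_def inj_on_def)
    then show ?thesis using S(3) hS False by (auto simp: pairwise_def orthogonal_def)
  qed
  then show ?thesis using d by blast
qed

lemma lap_sym:
  assumes "\<And>i j. w i j = w j i"
  shows "transpose (laplacian w) = laplacian w"
  using assms by (simp add: vec_eq_iff transpose_def laplacian_def)

lemma lap_mulv: "(laplacian w *v x) $ i = (\<Sum>j\<in>UNIV. w i j * (x $ i - x $ j))"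
proof -
  have "(laplacian w *v x) $ i = (\<Sum>j\<in>UNIV. (if i = j then (\<Sum>k\<in>UNIV - {i}. w i k) else - w i j) * x $ j)"
    by (simp add: matrix_vector_mult_def laplacian_def)
  also have "\<dots> = (\<Sum>k\<in>UNIV - {i}. w i k) * x $ i + (\<Sum>j\<in>UNIV - {i}. - w i j * x $ j)"
    by (subst sum.remove[of UNIV i]) (auto intro!: sum.cong)
  also have "\<dots> = (\<Sum>j\<in>UNIV - {i}. w i j * (x $ i - x $ j))"
    by (simp add: sum_distrib_right sum_distrib_left sum_subtractf sum_negf algebra_simps)
  also have "\<dots> = (\<Sum>j\<in>UNIV. w i j * (x $ i - x $ j))"
    using sum.remove[of UNIV i "\<lambda>j. w i j * (x $ i - x $ j)"] by simp
  finally show ?thesis .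
qed

lemma lap_quad:
  assumes sym: "\<And>i j. w i j = w j i"
  shows "x \<bullet> (laplacian w *v x) = (\<Sum>i\<in>UNIV. \<Sum>j\<in>UNIV. w i j * (x $ i - x $ j)^2) / 2"
proof -
  have A: "x \<bullet> (laplacian w *v x) = (\<Sum>i\<in>UNIV. \<Sum>j\<in>UNIV. w i j * x $ i * (x $ i - x $ j))"
    by (simp add: inner_vec_def lap_mulv sum_distrib_left algebra_simps)
  have "(\<Sum>i\<in>UNIV. \<Sum>j\<in>UNIV. w i j * x $ i * (x $ i - x $ j))
      = (\<Sum>j\<in>UNIV. \<Sum>i\<in>UNIV. w i j * x $ i * (x $ i - x $ j))" by (rule sum.swap)
  also have "\<dots> = (\<Sum>i\<in>UNIV. \<Sum>j\<in>UNIV. w i j * x $ j * (x $ j - x $ i))"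
    using sym by (simp add: mult.commute)
  finally have B: "(\<Sum>i\<in>UNIV. \<Sum>j\<in>UNIV. w i j * x $ i * (x $ i - x $ j))
      = (\<Sum>i\<in>UNIV. \<Sum>j\<in>UNIV. w i j * x $ j * (x $ j - x $ i))" .
  have "(\<Sum>i\<in>UNIV. \<Sum>j\<in>UNIV. w i j * (x $ i - x $ j)^2)
      = (\<Sum>i\<in>UNIV. \<Sum>j\<in>UNIV. w i j * x $ i * (x $ i - x $ j)) + (\<Sum>i\<in>UNIV. \<Sum>j\<in>UNIV. w i j * x $ j * (x $ j - x $ i))"
    by (simp add: sum.distrib[symmetric] power2_eq_square algebra_simps)
  then show ?thesis using A B by simp
qed

lemma lap_psd:
  assumes sym: "\<And>i j. w i j = w j i" and nn: "\<And>i j. 0 \<le> w i j"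
  shows "0 \<le> x \<bullet> (laplacian w *v x)"
  unfolding lap_quad[OF sym] using nn by (auto intro!: sum_nonneg divide_nonneg_nonneg)

lemma lap_kernel:
  assumes sym: "\<And>i j. w i j = w j i" and nn: "\<And>i j. 0 \<le> w i j"
    and conn: "\<And>i j. (i, j) \<in> {(a, b). a \<noteq> b \<and> 0 < w a b}\<^sup>*"
    and q0: "x \<bullet> (laplacian w *v x) = 0"
  shows "x $ i = x $ j"
proof -
  have s0: "(\<Sum>i\<in>UNIV. \<Sum>j\<in>UNIV. w i j * (x $ i - x $ j)^2) = 0"
    using q0 unfolding lap_quad[OF sym] by simp
  have "(\<Sum>j\<in>UNIV. w a j * (x $ a - x $ j)^2) = 0" for a
    using s0 nn by (subst (asm) sum_nonneg_eq_0_iff) (auto intro!: sum_nonneg)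
  then have z: "w a b * (x $ a - x $ b)^2 = 0" for a b
    using nn by (subst (asm) sum_nonneg_eq_0_iff) auto
  have edge: "x $ a = x $ b" if "0 < w a b" for a b
    using z[of a b] that by simp
  show ?thesis
    using conn[of i j]
  proof (induction rule: rtrancl_induct)
    case base then show ?case by simp
  next
    case (step y z) then show ?case using edge by auto
  qed
qed

definition Umat :: "('n \<Rightarrow> real^'n) \<Rightarrow> real^'n^'n" where
  "Umat u = (\<chi> m i. u i $ m)"

definition specm :: "('n \<Rightarrow> real^'n) \<Rightarrow> ('n \<Rightarrow> real) \<Rightarrow> real^'n^'n" where
  "specm u f = (\<chi> m p. \<Sum>i\<in>UNIV. f i * u i $ m * u i $ p)"

context
  fixes u :: "'n::finite \<Rightarrow> real^'n"
  assumes orth: "\<And>i j. u i \<bullet> u j = (if i = j then 1 else 0)"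
begin

lemma UtU: "transpose (Umat u) ** Umat u = mat 1"
  using orth by (simp add: vec_eq_iff matrix_matrix_mult_def transpose_def Umat_def mat_def inner_vec_def)

lemma complete: "(\<Sum>i\<in>UNIV. u i $ m * u i $ p) = (if m = p then 1 else 0)"
proof -
  have "Umat u ** transpose (Umat u) = mat 1"
    using UtU matrix_left_right_inverse by blast
  then have "(Umat u ** transpose (Umat u)) $ m $ p = mat 1 $ m $ p" by simp
  then show ?thesis by (simp add: matrix_matrix_mult_def transpose_def Umat_def mat_def)
qed

lemma specm_eig: "specm u f *v u j = f j *\<^sub>R u j"
proof -
  have "(specm u f *v u j) $ m = f j * u j $ m" for m
  proof -
    have "(specm u f *v u j) $ m = (\<Sum>p\<in>UNIV. (\<Sum>i\<in>UNIV. f i * u i $ m * u i $ p) * u j $ p)"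
      by (simp add: specm_def matrix_vector_mult_def)
    also have "\<dots> = (\<Sum>i\<in>UNIV. f i * u i $ m * (\<Sum>p\<in>UNIV. u i $ p * u j $ p))"
      by (simp add: sum_distrib_left sum_distrib_right mult.assoc) (rule sum.swap)
    also have "\<dots> = (\<Sum>i\<in>UNIV. f i * u i $ m * (if i = j then 1 else 0))"
      using orth by (simp add: inner_vec_def)
    also have "\<dots> = f j * u j $ m" by (simp add: if_distrib cong: if_cong)
    finally show ?thesis .
  qed
  then show ?thesis by (simp add: vec_eq_iff)
qed

lemma eq_specm:
  assumes "\<And>j. M *v u j = f j *\<^sub>R u j"
  shows "M = specm u f"
proof -
  have "M $ m $ p = specm u f $ m $ p" for m p
  proof -
    have "M $ m $ p = (\<Sum>q\<in>UNIV. M $ m $ q * (if q = p then 1 else 0))"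
      by (simp add: if_distrib cong: if_cong)
    also have "\<dots> = (\<Sum>q\<in>UNIV. M $ m $ q * (\<Sum>i\<in>UNIV. u i $ q * u i $ p))"
      by (simp add: complete)
    also have "\<dots> = (\<Sum>i\<in>UNIV. (\<Sum>q\<in>UNIV. M $ m $ q * u i $ q) * u i $ p)"
      by (simp add: sum_distrib_left sum_distrib_right mult.assoc) (rule sum.swap)
    also have "\<dots> = (\<Sum>i\<in>UNIV. (M *v u i) $ m * u i $ p)"
      by (simp add: matrix_vector_mult_def)
    also have "\<dots> = specm u f $ m $ p"
      using assms by (simp add: specm_def mult.assoc)
    finally show ?thesis .
  qed
  then show ?thesis by (simp add: vec_eq_iff)
qed

lemma specm_transpose: "transpose (specm u f) = specm u f"
  by (simp add: vec_eq_iff transpose_def specm_def mult.commute mult.left_commute)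

lemma specm_quad: "x \<bullet> (specm u f *v y) = (\<Sum>i\<in>UNIV. f i * (u i \<bullet> x) * (u i \<bullet> y))"
proof -
  have "x \<bullet> (specm u f *v y) = (\<Sum>m\<in>UNIV. x $ m * (\<Sum>p\<in>UNIV. (\<Sum>i\<in>UNIV. f i * u i $ m * u i $ p) * y $ p))"
    by (simp add: inner_vec_def specm_def matrix_vector_mult_def)
  also have "\<dots> = (\<Sum>m\<in>UNIV. \<Sum>i\<in>UNIV. \<Sum>p\<in>UNIV. f i * (u i $ m * x $ m) * (u i $ p * y $ p))"
    by (simp add: sum_distrib_left sum_distrib_right algebra_simps) (subst sum.swap, simp)
  also have "\<dots> = (\<Sum>i\<in>UNIV. \<Sum>m\<in>UNIV. \<Sum>p\<in>UNIV. f i * (u i $ m * x $ m) * (u i $ p * y $ p))"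
    by (rule sum.swap)
  also have "\<dots> = (\<Sum>i\<in>UNIV. f i * (u i \<bullet> x) * (u i \<bullet> y))"
    by (simp add: inner_vec_def sum_distrib_left sum_distrib_right mult.assoc) (rule sum.cong[OF refl], rule sum.swap)
  finally show ?thesis .
qed

lemma specm_one: "specm u (\<lambda>_. 1) = mat 1"
  by (rule eq_specm[symmetric]) simp

lemma parseval: "x \<bullet> y = (\<Sum>i\<in>UNIV. (u i \<bullet> x) * (u i \<bullet> y))"
  using specm_quad[of x "\<lambda>_. 1" y] by (simp add: specm_one)

lemma specm_psd: "(\<And>i. 0 \<le> f i) \<Longrightarrow> psd (specm u f)"
  unfolding psd_def using specm_transpose
  by (auto simp: specm_quad mult.assoc intro!: sum_nonneg)

lemma det_char:
  assumes eig: "\<And>i. L *v u i = d i *\<^sub>R u i"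
  shows "det (x *\<^sub>R mat 1 - L) = (\<Prod>i\<in>UNIV. x - d i)"
proof -
  define U where "U = Umat u"
  define D where "D = (\<chi> i j. if i = j then x - d j else (0::real))"
  have "(x *\<^sub>R mat 1 - L) ** U = U ** D"
  proof -
    have "((x *\<^sub>R mat 1 - L) ** U) $ m $ i = (U ** D) $ m $ i" for m i
    proof -
      have "((x *\<^sub>R mat 1 - L) ** U) $ m $ i = ((x *\<^sub>R mat 1 - L) *v u i) $ m"
        by (simp add: matrix_matrix_mult_def matrix_vector_mult_def U_def Umat_def)
      also have "\<dots> = (x - d i) * u i $ m"
      proof -
        have "(x *\<^sub>R mat 1 - L) *v u i = (x - d i) *\<^sub>R u i"
          by (simp add: matrix_vector_mult_diff_rdistrib scaleR_matrix_vector_assoc[symmetric] eig algebra_simps)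
        then show ?thesis by simp
      qed
      also have "\<dots> = (U ** D) $ m $ i"
        by (simp add: matrix_matrix_mult_def U_def Umat_def D_def if_distrib mult.commute cong: if_cong)
      finally show ?thesis .
    qed
    then show ?thesis by (simp add: vec_eq_iff)
  qed
  then have "det ((x *\<^sub>R mat 1 - L) ** U) = det (U ** D)" by simp
  then have "det (x *\<^sub>R mat 1 - L) * det U = det U * det D" unfolding det_mul .
  moreover have "det U \<noteq> 0"
  proof -
    have "det (transpose U) * det U = 1" using UtU det_mul[of "transpose U" U] by (simp add: U_def)
    then show ?thesis by auto
  qed
  moreover have "det D = (\<Prod>i\<in>UNIV. x - d i)" by (subst det_diagonal) (auto simp: D_def)
  ultimately show ?thesis by simp
qed

end

lemma isCont_prod_lin: "isCont (\<lambda>x::real. prod_mset (image_mset (\<lambda>b. x - b) M)) a"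
  by (induction M) (auto intro!: continuous_intros)

lemma prod_eq_imp_mset_eq:
  fixes A B :: "real multiset"
  assumes "\<And>x. prod_mset (image_mset (\<lambda>a. x - a) A) = prod_mset (image_mset (\<lambda>b. x - b) B)"
  shows "A = B"
  using assms
proof (induction A arbitrary: B)
  case empty
  show ?case
  proof (rule ccontr)
    assume "{#} \<noteq> B"
    then obtain b where "b \<in># B" by (metis multiset_nonemptyE)
    then have z: "prod_mset (image_mset (\<lambda>c. b - c) B) = 0"
      by (auto simp: prod_mset_zero_iff)
    have o: "prod_mset (image_mset (\<lambda>c. b - c) B) = 1" using empty[of b] by simp
    show False using z o by simp
  qed
next
  case (add a A)
  have "prod_mset (image_mset (\<lambda>c. a - c) B) = 0" using add.prems[of a] by simp
  then have "a \<in># B" by (auto simp: prod_mset_zero_iff)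
  then obtain B' where B: "B = add_mset a B'" by (metis multi_member_split)
  define PA where "PA = (\<lambda>x::real. prod_mset (image_mset (\<lambda>b. x - b) A))"
  define PB where "PB = (\<lambda>x::real. prod_mset (image_mset (\<lambda>b. x - b) B'))"
  have ne: "PA x = PB x" if "x \<noteq> a" for x
    using add.prems[of x] that by (simp add: B PA_def PB_def)
  have "PA y = PB y" for y
  proof (cases "y = a")
    case False then show ?thesis by (rule ne)
  next
    case True
    have l1: "(PA \<longlongrightarrow> PA a) (at a)" using isCont_prod_lin[where M=A and a=a] by (simp add: isCont_def PA_def)
    have l2: "(PB \<longlongrightarrow> PB a) (at a)" using isCont_prod_lin[where M=B' and a=a] by (simp add: isCont_def PB_def)
    have ev: "eventually (\<lambda>x. PB x = PA x) (at a)"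
      by (auto simp: eventually_at_filter ne)
    have "(PA \<longlongrightarrow> PB a) (at a)" by (rule Lim_transform_eventually[OF l2 ev])
    then have "PA a = PB a" using l1 tendsto_unique[OF at_neq_bot] by blast
    then show ?thesis using True by simp
  qed
  then have "A = B'" using add.IH unfolding PA_def PB_def by blast
  then show ?case by (simp add: B)
qed

lemma mset_from_prod:
  fixes d :: "'n::finite \<Rightarrow> real" and lam :: "nat \<Rightarrow> real"
  assumes "\<And>x. (\<Prod>i\<in>UNIV. x - d i) = (\<Prod>n\<in>S. x - lam n)" and "finite S"
  shows "image_mset d (mset_set UNIV) = image_mset lam (mset_set S)"
proof (rule prod_eq_imp_mset_eq)
  fix x
  show "prod_mset (image_mset (\<lambda>a. x - a) (image_mset d (mset_set UNIV))) =
        prod_mset (image_mset (\<lambda>b. x - b) (image_mset lam (mset_set S)))"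
    using assms(1)[of x] by (simp add: prod_unfold_prod_mset multiset.map_comp comp_def)
qed

lemma sum_transfer:
  fixes d :: "'n::finite \<Rightarrow> real" and lam :: "nat \<Rightarrow> real"
  assumes "image_mset d (mset_set UNIV) = image_mset lam (mset_set S)"
  shows "(\<Sum>i\<in>UNIV. \<phi> (d i)) = (\<Sum>n\<in>S. \<phi> (lam n))"
proof -
  have "(\<Sum>i\<in>UNIV. \<phi> (d i)) = sum_mset (image_mset \<phi> (image_mset d (mset_set UNIV)))"
    by (simp add: sum_unfold_sum_mset multiset.map_comp comp_def)
  also have "\<dots> = sum_mset (image_mset \<phi> (image_mset lam (mset_set S)))" by (simp add: assms)
  also have "\<dots> = (\<Sum>n\<in>S. \<phi> (lam n))"
    by (simp add: sum_unfold_sum_mset multiset.map_comp comp_def)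
  finally show ?thesis .
qed

lemma range_transfer:
  fixes d :: "'n::finite \<Rightarrow> real" and lam :: "nat \<Rightarrow> real"
  assumes "image_mset d (mset_set UNIV) = image_mset lam (mset_set S)" "finite S"
  shows "d ` UNIV = lam ` S"
proof -
  have "set_mset (image_mset d (mset_set UNIV)) = set_mset (image_mset lam (mset_set S))"
    by (simp add: assms)
  then show ?thesis using assms(2) by simp
qed

lemma psd_root_eig:
  fixes S L :: "real^'n^'n"
  assumes psdS: "psd S" and SS: "S ** S = L" and eig: "L *v v = \<mu> *\<^sub>R v" and l0: "0 \<le> \<mu>"
  shows "S *v v = sqrt \<mu> *\<^sub>R v"
proof -
  have symS: "transpose S = S" using psdS by (simp add: psd_def)
  have SSv: "S *v (S *v x) = L *v x" for x using SS by (simp add: matrix_vector_mul_assoc)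
  show ?thesis
  proof (cases "\<mu> = 0")
    case True
    have "(S *v v) \<bullet> (S *v v) = v \<bullet> (S *v (S *v v))" using sym_dot[OF symS, of v "S *v v"] by simp
    also have "\<dots> = 0" using eig True by (simp add: SSv)
    finally have "S *v v = 0" by simp
    then show ?thesis using True by simp
  next
    case False
    define r where "r = sqrt \<mu>"
    have r0: "0 < r" using False l0 by (simp add: r_def)
    have rr: "r * r = \<mu>" using l0 by (simp add: r_def)
    define w where "w = S *v v - r *\<^sub>R v"
    have Sw: "S *v w = - r *\<^sub>R w"
    proof -
      have "S *v w = L *v v - r *\<^sub>R (S *v v)"
        by (simp add: w_def matrix_vector_mult_diff_distrib matrix_scaleR_vector_ac SSv scaleR_matrix_vector_assoc)
      also have "\<dots> = (r * r) *\<^sub>R v - r *\<^sub>R (S *v v)" using eig rr by simp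
      also have "\<dots> = - r *\<^sub>R w" by (simp add: w_def algebra_simps)
      finally show ?thesis .
    qed
    have "0 \<le> w \<bullet> (S *v w)" using psdS by (simp add: psd_def)
    also have "\<dots> = - r * (w \<bullet> w)" by (simp add: Sw)
    finally have "w \<bullet> w \<le> 0" using r0 by (simp add: mult_le_0_iff)
    then have "w = 0" using inner_ge_zero[of w] by simp
    then show ?thesis by (simp add: w_def r_def)
  qed
qed

lemma psd_sqrt_spec:
  fixes L :: "real^'n^'n" and u :: "'n \<Rightarrow> real^'n"
  assumes orth: "\<And>i j. u i \<bullet> u j = (if i = j then 1 else 0)"
    and eig: "\<And>i. L *v u i = d i *\<^sub>R u i" and dnn: "\<And>i. 0 \<le> d i"
  shows "psd_sqrt L = specm u (\<lambda>i. sqrt (d i))"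
  unfolding psd_sqrt_def
proof (rule the_equality)
  let ?S0 = "specm u (\<lambda>i. sqrt (d i))"
  have L: "L = specm u d" using eq_specm[OF orth eig] .
  show "psd ?S0 \<and> ?S0 ** ?S0 = L"
  proof
    show "psd ?S0" using specm_psd[OF orth] dnn by simp
    have "(?S0 ** ?S0) *v u j = d j *\<^sub>R u j" for j
    proof -
      have "(?S0 ** ?S0) *v u j = ?S0 *v (?S0 *v u j)" by (simp add: matrix_vector_mul_assoc)
      also have "\<dots> = (sqrt (d j) * sqrt (d j)) *\<^sub>R u j"
        by (simp add: specm_eig[OF orth] matrix_scaleR_vector_ac scaleR_matrix_vector_assoc[symmetric])
      also have "\<dots> = d j *\<^sub>R u j" using dnn[of j] by simp
      finally show ?thesis .
    qed
    then show "?S0 ** ?S0 = L" using eq_specm[OF orth] L by metis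
  qed
  fix S assume S: "psd S \<and> S ** S = L"
  show "S = ?S0"
    by (rule eq_specm[OF orth]) (use psd_root_eig[of S L] S eig dnn in auto)
qed

lemma UNIV_3': "(UNIV :: 3 set) = {0, 1, 2}"
proof -
  have "x \<in> {0, 1, 2}" for x :: 3
  proof -
    have "x = 1 \<or> x = 2 \<or> x = 3" by (rule exhaust_3)
    moreover have "(3::3) = 0" by simp
    ultimately show ?thesis by auto
  qed
  then show ?thesis by auto
qed

lemma UNIV_2': "(UNIV :: 2 set) = {0, 1}"
proof -
  have "x \<in> {0, 1}" for x :: 2
  proof -
    have "x = 1 \<or> x = 2" by (rule exhaust_2)
    moreover have "(2::2) = 0" by simp
    ultimately show ?thesis by auto
  qed
  then show ?thesis by auto
qed

lemma neg_mulv: "(- (M::real^'n^'m)) *v v = - (M *v v)"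
  using matrix_vector_mult_diff_rdistrib[of 0 M v] by simp

lemma sum_3: "(\<Sum>b\<in>(UNIV::3 set). f b) = f 0 + f 1 + f 2"
proof -
  have "(0::3) \<notin> {1, 2}" "(1::3) \<notin> {2}" by simp_all
  then show ?thesis unfolding UNIV_3' by (simp add: add.assoc)
qed

lemma sum_2: "(\<Sum>b\<in>(UNIV::2 set). f b) = f 0 + f 1"
proof -
  have "(0::2) \<notin> {1}" by simp
  then show ?thesis unfolding UNIV_2' by simp
qed

lemma sum_prod_UNIV: "(\<Sum>x\<in>(UNIV::('a::finite \<times> 'b::finite) set). f x) = (\<Sum>a\<in>UNIV. \<Sum>b\<in>UNIV. f (a, b))"
  by (simp add: sum.cartesian_product UNIV_Times_UNIV[symmetric] del: UNIV_Times_UNIV)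

definition blk :: "real^('n::finite \<times> 'k::finite) \<Rightarrow> 'k \<Rightarrow> real^'n" where
  "blk y b = (\<chi> q. y $ (q, b))"

lemma blk_nth[simp]: "blk y b $ q = y $ (q, b)"
  by (simp add: blk_def)

lemma block3_mulv: "(block3 M *v y) $ (p, a) = (\<Sum>b\<in>UNIV. (M a b *v blk y b) $ p)"
  by (simp add: block3_def matrix_vector_mult_def sum_prod_UNIV) (rule sum.swap)

lemma block23_mulv: "(block23 M *v y) $ (p, a) = (\<Sum>b\<in>UNIV. (M a b *v blk y b) $ p)"
  by (simp add: block23_def matrix_vector_mult_def sum_prod_UNIV) (rule sum.swap)

lemma sysA_0: "(sysA L kP tauP kQ tauQ cQ *v y) $ (p, 0) = y $ (p, 1)"
  by (simp add: sysA_def block3_mulv sum_3)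

lemma sysA_1: "(sysA L kP tauP kQ tauQ cQ *v y) $ (p, 1) = - (kP / tauP) * (L *v blk y 0) $ p - (1 / tauP) * y $ (p, 1)"
  by (simp add: sysA_def block3_mulv sum_3 scaleR_matrix_vector_assoc[symmetric] neg_mulv)

lemma sysA_2: "(sysA L kP tauP kQ tauQ cQ *v y) $ (p, 2) = - (cQ / tauQ) * y $ (p, 2) - (kQ / tauQ) * (L *v blk y 2) $ p"
  by (simp add: sysA_def block3_mulv sum_3 scaleR_matrix_vector_assoc[symmetric] matrix_vector_mult_diff_rdistrib neg_mulv)

lemma sysC_0: "(sysC L \<alpha> *v y) $ (p, 0) = sqrt \<alpha> * (psd_sqrt L *v blk y 0) $ p"
  by (simp add: sysC_def block23_mulv sum_3 scaleR_matrix_vector_assoc[symmetric])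

lemma sysC_1: "(sysC L \<alpha> *v y) $ (p, 1) = sqrt \<alpha> * (psd_sqrt L *v blk y 2) $ p"
  by (simp add: sysC_def block23_mulv sum_3 scaleR_matrix_vector_assoc[symmetric])

definition bcol :: "real^'c^'r \<Rightarrow> 'c \<Rightarrow> real^'r" where
  "bcol B j = (\<chi> k. B $ k $ j)"

lemma sysB_col0: "blk (bcol (sysB tauP tauQ) (k, 0)) b = (if b = 1 then (\<chi> p. if p = k then 1 / tauP else 0) else 0)"
  by (simp add: vec_eq_iff bcol_def sysB_def block32_def mat_def)

lemma sysB_col1: "blk (bcol (sysB tauP tauQ) (k, 1)) b = (if b = 2 then (\<chi> p. if p = k then 1 / tauQ else 0) else 0)"
  by (simp add: vec_eq_iff bcol_def sysB_def block32_def mat_def)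

lemma frob_cols: "frob_sq (C ** F ** B) = (\<Sum>j\<in>UNIV. \<Sum>r\<in>UNIV. ((C *v (F *v bcol B j)) $ r)^2)"
proof -
  have "(C ** F ** B) $ r $ j = (C *v (F *v bcol B j)) $ r" for r j
    by (simp add: matrix_vector_mul_assoc matrix_matrix_mult_def matrix_vector_mult_def bcol_def
        sum_distrib_left sum_distrib_right mult.assoc) (rule sum.swap)
  then show ?thesis unfolding frob_sq_def by (simp) (rule sum.swap)
qed

lemma inner_blk_deriv:
  fixes M :: "real^('n::finite \<times> 'k::finite)^('n \<times> 'k)"
  shows "((\<lambda>t. v \<bullet> blk (traj M x0 t) b) has_real_derivative (v \<bullet> blk (M *v traj M x0 t) b)) (at t)"
proof -
  have "((\<lambda>t. \<Sum>p\<in>UNIV. v $ p * traj M x0 t $ (p, b)) has_real_derivative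
          (\<Sum>p\<in>UNIV. v $ p * (M *v traj M x0 t) $ (p, b))) (at t)"
    by (intro DERIV_sum DERIV_cmult traj_deriv)
  then show ?thesis by (simp add: inner_vec_def)
qed

context
  fixes L :: "real^'n::finite^'n" and u :: "'n \<Rightarrow> real^'n" and d :: "'n \<Rightarrow> real"
    and kP tauP kQ tauQ cQ :: real
  assumes symL: "transpose L = L" and eigL: "\<And>i. L *v u i = d i *\<^sub>R u i"
begin

lemma uL: "u i \<bullet> (L *v v) = d i * (u i \<bullet> v)"
  using sym_dot[OF symL, of "u i" v] by (simp add: eigL)

lemma modal_D:
  "((\<lambda>t. u i \<bullet> blk (traj (sysA L kP tauP kQ tauQ cQ) x0 t) 0) has_real_derivative
     (u i \<bullet> blk (traj (sysA L kP tauP kQ tauQ cQ) x0 t) 1)) (at t)"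
proof -
  have "blk (sysA L kP tauP kQ tauQ cQ *v y) 0 = blk y 1" for y
    by (simp add: vec_eq_iff sysA_0)
  then show ?thesis using inner_blk_deriv[of "u i" "sysA L kP tauP kQ tauQ cQ" x0 0 t] by simp
qed

lemma modal_W:
  "((\<lambda>t. u i \<bullet> blk (traj (sysA L kP tauP kQ tauQ cQ) x0 t) 1) has_real_derivative
     (- (kP / tauP) * d i * (u i \<bullet> blk (traj (sysA L kP tauP kQ tauQ cQ) x0 t) 0)
      - (1 / tauP) * (u i \<bullet> blk (traj (sysA L kP tauP kQ tauQ cQ) x0 t) 1))) (at t)"
proof -
  have "u i \<bullet> blk (sysA L kP tauP kQ tauQ cQ *v y) 1 =
        - (kP / tauP) * d i * (u i \<bullet> blk y 0) - (1 / tauP) * (u i \<bullet> blk y 1)" for y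
  proof -
    have "blk (sysA L kP tauP kQ tauQ cQ *v y) 1 = (- (kP / tauP)) *\<^sub>R (L *v blk y 0) - (1 / tauP) *\<^sub>R blk y 1"
      by (simp add: vec_eq_iff sysA_1)
    then show ?thesis by (simp add: inner_diff_right uL)
  qed
  then show ?thesis using inner_blk_deriv[of "u i" "sysA L kP tauP kQ tauQ cQ" x0 1 t] by simp
qed

lemma modal_V:
  "((\<lambda>t. u i \<bullet> blk (traj (sysA L kP tauP kQ tauQ cQ) x0 t) 2) has_real_derivative
     (- ((cQ + kQ * d i) / tauQ) * (u i \<bullet> blk (traj (sysA L kP tauP kQ tauQ cQ) x0 t) 2))) (at t)"
proof -
  have "u i \<bullet> blk (sysA L kP tauP kQ tauQ cQ *v y) 2 =
        - ((cQ + kQ * d i) / tauQ) * (u i \<bullet> blk y 2)" for y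
  proof -
    have e: "blk (sysA L kP tauP kQ tauQ cQ *v y) 2 = (- (cQ / tauQ)) *\<^sub>R blk y 2 - (kQ / tauQ) *\<^sub>R (L *v blk y 2)"
      by (simp add: vec_eq_iff sysA_2)
    have "u i \<bullet> blk (sysA L kP tauP kQ tauQ cQ *v y) 2 = u i \<bullet> ((- (cQ / tauQ)) *\<^sub>R blk y 2 - (kQ / tauQ) *\<^sub>R (L *v blk y 2))"
      by (simp only: e)
    also have "\<dots> = - (cQ / tauQ) * (u i \<bullet> blk y 2) - (kQ / tauQ) * (d i * (u i \<bullet> blk y 2))"
      by (simp only: inner_diff_right inner_scaleR_right uL)
    also have "\<dots> = - ((cQ + kQ * d i) / tauQ) * (u i \<bullet> blk y 2)"
      by (simp add: add_divide_distrib ring_distribs)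
    finally show ?thesis .
  qed
  then show ?thesis using inner_blk_deriv[of "u i" "sysA L kP tauP kQ tauQ cQ" x0 2 t] by simp
qed

lemma modal_integral:
  assumes pos: "0 < kP" "0 < tauP" "0 < kQ" "0 < tauQ" "1 \<le> cQ" and dnn: "0 \<le> d i"
    and x00: "blk x0 0 = 0"
  shows "((\<lambda>t. d i * (u i \<bullet> blk (traj (sysA L kP tauP kQ tauQ cQ) x0 t) 0)^2
              + d i * (u i \<bullet> blk (traj (sysA L kP tauP kQ tauQ cQ) x0 t) 2)^2)
          has_integral (if 0 < d i then tauP^2 / (2 * kP) * (u i \<bullet> blk x0 1)^2
               + d i * (u i \<bullet> blk x0 2)^2 / (2 * ((cQ + kQ * d i) / tauQ)) else 0)) {0..}"
proof (cases "0 < d i")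
  case False
  then have "d i = 0" using dnn by simp
  then show ?thesis by simp
next
  case True
  let ?y = "traj (sysA L kP tauP kQ tauQ cQ) x0"
  have I1: "((\<lambda>t. d i * (u i \<bullet> blk (?y t) 0)^2) has_integral
      ((d i / (2 * (1/tauP)) + (1/tauP) / (2 * (kP/tauP))) * (u i \<bullet> blk (?y 0) 0)^2
        + 2 * (1 / (2 * (kP/tauP))) * (u i \<bullet> blk (?y 0) 0) * (u i \<bullet> blk (?y 0) 1)
        + (1 / (2 * (kP/tauP) * (1/tauP))) * (u i \<bullet> blk (?y 0) 1)^2)) {0..}"
  proof (rule scalar2_integral)
    show "((\<lambda>t. u i \<bullet> blk (?y t) 0) has_real_derivative u i \<bullet> blk (?y t) 1) (at t)" for t
      by (rule modal_D)
    show "((\<lambda>t. u i \<bullet> blk (?y t) 1) has_real_derivative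
         - (kP / tauP) * d i * (u i \<bullet> blk (?y t) 0) - 1 / tauP * (u i \<bullet> blk (?y t) 1)) (at t)" for t
      by (rule modal_W)
  qed (use pos True in auto)
  have I2: "((\<lambda>t. (u i \<bullet> blk (?y t) 2)^2) has_integral
      (u i \<bullet> blk (?y 0) 2)^2 / (2 * ((cQ + kQ * d i) / tauQ))) {0..}"
  proof (rule scalar1_integral)
    show "((\<lambda>t. u i \<bullet> blk (?y t) 2) has_real_derivative
         - ((cQ + kQ * d i) / tauQ) * (u i \<bullet> blk (?y t) 2)) (at t)" for t
      by (rule modal_V)
    show "0 < (cQ + kQ * d i) / tauQ" using pos dnn by (auto intro!: divide_pos_pos add_pos_nonneg)
  qed
  have y0: "?y 0 = x0" by (rule traj_0)
  have "((\<lambda>t. d i * (u i \<bullet> blk (?y t) 0)^2 + d i * (u i \<bullet> blk (?y t) 2)^2) has_integral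
      (tauP^2 / (2 * kP) * (u i \<bullet> blk x0 1)^2 + d i * (u i \<bullet> blk x0 2)^2 / (2 * ((cQ + kQ * d i) / tauQ)))) {0..}"
  proof (rule has_integral_add)
    show "((\<lambda>t. d i * (u i \<bullet> blk (?y t) 0)^2) has_integral tauP^2 / (2 * kP) * (u i \<bullet> blk x0 1)^2) {0..}"
      using I1 pos unfolding y0 x00 by (simp add: power2_eq_square field_simps)
    show "((\<lambda>t. d i * (u i \<bullet> blk (?y t) 2)^2) has_integral d i * (u i \<bullet> blk x0 2)^2 / (2 * ((cQ + kQ * d i) / tauQ))) {0..}"
      using has_integral_mult_right[OF I2, of "d i"] unfolding y0 by (simp only: times_divide_eq_right)
  qed
  then show ?thesis using True by simp
qed

end

lemma inner_delta: "v \<bullet> (\<chi> p. if p = k then c else 0) = v $ k * (c::real)"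
  by (simp add: inner_vec_def if_distrib cong: if_cong)

theorem theorem2:
  fixes w :: "'n::finite \<Rightarrow> 'n \<Rightarrow> real"
    and lam :: "nat \<Rightarrow> real"
    and kP tauP kQ tauQ bbar \<alpha> cQ :: real
  assumes w_sym: "\<And>i j. w i j = w j i"
    and w_nonneg: "\<And>i j. 0 \<le> w i j"
    and connected: "\<And>i j. (i, j) \<in> {(a, b). a \<noteq> b \<and> 0 < w a b}\<^sup>*"
    and eig: "\<And>x. det (x *\<^sub>R mat 1 - laplacian w) = (\<Prod>n = 1..CARD('n). x - lam n)"
    and lam_sorted: "\<And>m n. 1 \<le> m \<Longrightarrow> m \<le> n \<Longrightarrow> n \<le> CARD('n) \<Longrightarrow> lam m \<le> lam n"
    and pos: "0 < kP" "0 < tauP" "0 < kQ" "0 < tauQ" "0 < \<alpha>"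
    and bbar: "0 \<le> bbar"
    and cQ: "cQ = 1 + 2 * kQ * bbar"
  shows "has_h2_norm_sq (sysA (laplacian w) kP tauP kQ tauQ cQ) (sysB tauP tauQ)
           (sysC (laplacian w) \<alpha>)
           (\<alpha> / (2 * kP) * (real CARD('n) - 1)
            + \<alpha> / (2 * tauQ) * (\<Sum>n = 2..CARD('n). 1 / (cQ / lam n + kQ)))"
proof -
  define L where "L = laplacian w"
  define N where "N = CARD('n)"
  have N1: "1 \<le> N" unfolding N_def by (simp add: Suc_leI)
  have cQ1: "1 \<le> cQ" using cQ pos bbar by simp
  have symL: "transpose L = L" unfolding L_def by (rule lap_sym) (rule w_sym)
  obtain u :: "'n \<Rightarrow> real^'n" and d :: "'n \<Rightarrow> real" where orth: "\<And>i j. u i \<bullet> u j = (if i = j then 1 else 0)"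
      and eigL: "\<And>i. L *v u i = d i *\<^sub>R u i"
    using spectral[OF symL] by auto
  have uL: "u i \<bullet> (L *v v) = d i * (u i \<bullet> v)" for i v
    using sym_dot[OF symL, of "u i" v] by (simp add: eigL)
  have dnn: "0 \<le> d i" for i
  proof -
    have "u i \<bullet> (L *v u i) = d i" using eigL[of i] orth[of i i] by simp
    moreover have "0 \<le> u i \<bullet> (L *v u i)" unfolding L_def by (rule lap_psd[OF w_sym w_nonneg])
    ultimately show ?thesis by simp
  qed
  have const: "u i $ p = u i $ q" if "d i = 0" for i p q
  proof -
    have "u i \<bullet> (laplacian w *v u i) = 0" using eigL[of i] that by (simp add: L_def)
    then show ?thesis by (rule lap_kernel[OF w_sym w_nonneg connected])
  qed
  obtain p0 :: 'n where True by blast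
  have uu_const: "u i \<bullet> u j = real N * (u i $ p0 * u j $ p0)" if "d i = 0" "d j = 0" for i j
  proof -
    have "u i \<bullet> u j = (\<Sum>p::'n\<in>UNIV. u i $ p0 * u j $ p0)"
      unfolding inner_vec_def inner_real_def
      by (rule sum.cong[OF refl]) (metis const[OF that(1)] const[OF that(2)])
    then show ?thesis by (simp add: N_def)
  qed
  have zuniq: "i = j" if "d i = 0" "d j = 0" for i j
  proof (rule ccontr)
    assume ij: "i \<noteq> j"
    have "real N * (u i $ p0 * u i $ p0) = 1" using uu_const[of i i] that orth[of i i] by simp
    moreover have "real N * (u j $ p0 * u j $ p0) = 1" using uu_const[of j j] that orth[of j j] by simp
    moreover have "real N * (u i $ p0 * u j $ p0) = 0" using uu_const[of i j] that orth[of i j] ij by simp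
    ultimately show False using N1 by auto
  qed
  have zex: "\<exists>i. d i = 0"
  proof (rule ccontr)
    assume nz: "\<not> (\<exists>i. d i = 0)"
    define one :: "real^'n" where "one = (\<chi> p. 1)"
    have L1: "L *v one = 0" by (simp add: vec_eq_iff L_def lap_mulv one_def)
    have "u i \<bullet> one = 0" for i using uL[of i one] nz by (simp add: L1)
    then have "one \<bullet> one = 0" using parseval[OF orth, of one one] by simp
    moreover have "one \<bullet> one = real N" by (simp add: one_def inner_vec_def N_def)
    ultimately show False using N1 by simp
  qed
  have mset: "image_mset d (mset_set UNIV) = image_mset lam (mset_set {1..N})"
  proof (rule mset_from_prod)
    fix x show "(\<Prod>i\<in>UNIV. x - d i) = (\<Prod>n\<in>{1..N}. x - lam n)"
      using det_char[OF orth eigL, of x] eig[of x] by (simp add: L_def N_def)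
  qed simp
  have range: "d ` UNIV = lam ` {1..N}" by (rule range_transfer[OF mset]) simp
  have lamnn: "0 \<le> lam n" if "n \<in> {1..N}" for n
  proof -
    have "lam n \<in> d ` UNIV" using range that by auto
    then show ?thesis using dnn by auto
  qed
  have lam1: "lam 1 = 0"
  proof -
    obtain i where "d i = 0" using zex by blast
    then have "0 \<in> lam ` {1..N}" using range by (metis rangeI)
    then obtain n0 where n0: "n0 \<in> {1..N}" "lam n0 = 0" by auto
    have "lam 1 \<le> lam n0" using n0 by (intro lam_sorted) (auto simp: N_def)
    moreover have "0 \<le> lam 1" using lamnn N1 by auto
    ultimately show ?thesis using n0 by simp
  qed
  have cnt: "(\<Sum>i\<in>UNIV. (if d i = 0 then 1 else 0 :: real)) = (\<Sum>n\<in>{1..N}. (if lam n = 0 then 1 else 0))"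
    by (rule sum_transfer[OF mset])
  have cnt1: "(\<Sum>i\<in>UNIV. (if d i = 0 then 1 else 0 :: real)) = 1"
  proof -
    obtain i0 where i0: "d i0 = 0" using zex by blast
    have "{i. d i = 0} = {i0}" using zuniq i0 by auto
    then show ?thesis by (simp add: sum.If_cases)
  qed
  have lampos: "0 < lam n" if n: "n \<in> {2..N}" for n
  proof (rule ccontr)
    assume "\<not> 0 < lam n"
    then have ln0: "lam n = 0" using lamnn[of n] n by auto
    have "(\<Sum>m\<in>{1, n}. (if lam m = 0 then 1 else 0 :: real)) \<le> (\<Sum>m\<in>{1..N}. (if lam m = 0 then 1 else 0))"
      by (rule sum_mono2) (use n in auto)
    moreover have "(\<Sum>m\<in>{1, n}. (if lam m = 0 then 1 else 0 :: real)) = 2" using n ln0 lam1 by auto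
    ultimately show False using cnt cnt1 by simp
  qed
  define g where "g = (\<lambda>x. if 0 < x then \<alpha> / (2 * kP) + \<alpha> / (2 * tauQ) * (1 / (cQ / x + kQ)) else 0)"
  have target: "\<alpha> / (2 * kP) * (real CARD('n) - 1) + \<alpha> / (2 * tauQ) * (\<Sum>n = 2..CARD('n). 1 / (cQ / lam n + kQ))
      = (\<Sum>i\<in>UNIV. g (d i))"
  proof -
    have "(\<Sum>i\<in>UNIV. g (d i)) = (\<Sum>n\<in>{1..N}. g (lam n))" by (rule sum_transfer[OF mset])
    also have "{1..N} = insert 1 {2..N}" using N1 by auto
    also have "(\<Sum>n\<in>insert 1 {2..N}. g (lam n)) = g (lam 1) + (\<Sum>n\<in>{2..N}. g (lam n))"
      by (rule sum.insert) auto
    also have "(\<Sum>n\<in>{2..N}. g (lam n)) = (\<Sum>n\<in>{2..N}. \<alpha> / (2 * kP) + \<alpha> / (2 * tauQ) * (1 / (cQ / lam n + kQ)))"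
      by (rule sum.cong) (auto simp: g_def lampos)
    also have "\<dots> = real (card {2..N}) * (\<alpha> / (2 * kP)) + \<alpha> / (2 * tauQ) * (\<Sum>n\<in>{2..N}. 1 / (cQ / lam n + kQ))"
      by (simp add: sum.distrib sum_distrib_left)
    also have "real (card {2..N}) = real N - 1" using N1 by simp
    moreover have "lam (Suc 0) = 0" using lam1 by simp
    ultimately show ?thesis by (simp add: g_def lam1 N_def algebra_simps)
  qed
  define A where "A = sysA L kP tauP kQ tauQ cQ"
  define B where "B = (sysB tauP tauQ :: real^('n \<times> 2)^('n \<times> 3))"
  define C where "C = sysC L \<alpha>"
  define S where "S = psd_sqrt L"
  have Sspec: "S = specm u (\<lambda>i. sqrt (d i))" unfolding S_def by (rule psd_sqrt_spec[OF orth eigL dnn])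
  have Lspec: "L = specm u d" by (rule eq_specm[OF orth eigL])
  have symS: "transpose S = S" unfolding Sspec by (rule specm_transpose[OF orth])
  have SS: "S *v (S *v v) = L *v v" for v
  proof -
    have "S ** S = L"
      unfolding Lspec
    proof (rule eq_specm[OF orth])
      fix j
      have "(S ** S) *v u j = S *v (S *v u j)" by (simp add: matrix_vector_mul_assoc)
      also have "\<dots> = (sqrt (d j) * sqrt (d j)) *\<^sub>R u j"
        unfolding Sspec by (simp add: specm_eig[OF orth] matrix_scaleR_vector_ac scaleR_matrix_vector_assoc[symmetric])
      also have "\<dots> = d j *\<^sub>R u j" using dnn[of j] by simp
      finally show "(S ** S) *v u j = d j *\<^sub>R u j" .
    qed
    then show ?thesis by (simp add: matrix_vector_mul_assoc)
  qed
  have Snorm: "(S *v v) \<bullet> (S *v v) = (\<Sum>i\<in>UNIV. d i * (u i \<bullet> v)^2)" for v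
  proof -
    have "(S *v v) \<bullet> (S *v v) = v \<bullet> (S *v (S *v v))" using sym_dot[OF symS, of v "S *v v"] by simp
    also have "\<dots> = v \<bullet> (L *v v)" by (simp add: SS)
    also have "\<dots> = (\<Sum>i\<in>UNIV. d i * (u i \<bullet> v)^2)"
      unfolding Lspec specm_quad[OF orth] by (simp add: power2_eq_square mult.assoc)
    finally show ?thesis .
  qed
  have Cnorm: "(\<Sum>r\<in>UNIV. ((C *v y) $ r)^2) =
      \<alpha> * ((\<Sum>i\<in>UNIV. d i * (u i \<bullet> blk y 0)^2) + (\<Sum>i\<in>UNIV. d i * (u i \<bullet> blk y 2)^2))" for y
  proof -
    have "(\<Sum>r\<in>UNIV. ((C *v y) $ r)^2) = (\<Sum>m\<in>UNIV. ((C *v y) $ (m, 0))^2 + ((C *v y) $ (m, 1))^2)"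
      by (simp add: sum_prod_UNIV sum_2)
    also have "\<dots> = (\<Sum>m\<in>UNIV. \<alpha> * ((S *v blk y 0) $ m)^2 + \<alpha> * ((S *v blk y 2) $ m)^2)"
      using pos by (simp add: C_def sysC_0 sysC_1 S_def power_mult_distrib)
    also have "\<dots> = \<alpha> * ((S *v blk y 0) \<bullet> (S *v blk y 0) + (S *v blk y 2) \<bullet> (S *v blk y 2))"
      by (simp add: inner_vec_def sum.distrib sum_distrib_left power2_eq_square algebra_simps)
    finally show ?thesis by (simp add: Snorm)
  qed
  define val where "val = (\<lambda>i j. if 0 < d i then tauP^2 / (2 * kP) * (u i \<bullet> blk (bcol B j) 1)^2
               + d i * (u i \<bullet> blk (bcol B j) 2)^2 / (2 * ((cQ + kQ * d i) / tauQ)) else 0)"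
  define h where "h = (\<lambda>i j t. d i * (u i \<bullet> blk (traj A (bcol B j) t) 0)^2
              + d i * (u i \<bullet> blk (traj A (bcol B j) t) 2)^2)"
  have blk0: "blk (bcol B j) 0 = 0" for j
  proof -
    obtain k ob where j: "j = (k, ob)" by (cases j)
    have "ob = 0 \<or> ob = 1" using UNIV_2' by auto
    then show ?thesis unfolding j B_def
      by (elim disjE) (simp_all add: sysB_col0 sysB_col1)
  qed
  have hint: "(h i j has_integral val i j) {0..}" for i j
    unfolding h_def val_def A_def
    by (rule modal_integral[OF symL eigL pos(1-4) cQ1 dnn blk0])
  have fdec: "frob_sq (C ** mexp (t *\<^sub>R A) ** B) = (\<Sum>j\<in>UNIV. \<Sum>i\<in>UNIV. \<alpha> * h i j t)" for t
    unfolding frob_cols Cnorm h_def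
    by (simp add: traj_def sum.distrib sum_distrib_left algebra_simps)
  have integral: "((\<lambda>t. frob_sq (C ** mexp (t *\<^sub>R A) ** B)) has_integral
      (\<Sum>j\<in>UNIV. \<Sum>i\<in>UNIV. \<alpha> * val i j)) {0..}"
    unfolding fdec
    by (intro has_integral_sum has_integral_mult_right hint) auto
  have valsum: "(\<Sum>j\<in>UNIV. \<Sum>i\<in>UNIV. \<alpha> * val i j) = (\<Sum>i\<in>UNIV. g (d i))"
  proof -
    have "(\<Sum>j\<in>UNIV. \<Sum>i\<in>UNIV. \<alpha> * val i j) = (\<Sum>i\<in>UNIV. \<Sum>j\<in>UNIV. \<alpha> * val i j)"
      by (rule sum.swap)
    also have "\<dots> = (\<Sum>i\<in>UNIV. g (d i))"
    proof (rule sum.cong[OF refl])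
      fix i
      show "(\<Sum>j\<in>UNIV. \<alpha> * val i j) = g (d i)"
      proof (cases "0 < d i")
        case False then show ?thesis by (simp add: val_def g_def)
      next
        case True
        have v0: "val i (k, 0) = (u i $ k)^2 * (1 / (2 * kP))" for k
          using True pos unfolding val_def B_def
          by (simp add: sysB_col0 inner_delta power2_eq_square field_simps)
        have v1: "val i (k, 1) = (u i $ k)^2 * (d i / (2 * tauQ * (cQ + kQ * d i)))" for k
          using True pos unfolding val_def B_def
          by (simp add: sysB_col1 inner_delta power2_eq_square field_simps)
        have uu: "(\<Sum>k\<in>UNIV. (u i $ k)^2) = 1" using orth[of i i] by (simp add: inner_vec_def power2_eq_square)
        have "(\<Sum>j\<in>UNIV. \<alpha> * val i j) = \<alpha> * (\<Sum>k\<in>UNIV. val i (k, 0) + val i (k, 1))"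
          by (simp add: sum_prod_UNIV sum_2 sum_distrib_left distrib_left)
        also have "\<dots> = \<alpha> * (\<Sum>k\<in>UNIV. (u i $ k)^2 * (1 / (2 * kP) + d i / (2 * tauQ * (cQ + kQ * d i))))"
          by (simp only: v0 v1 distrib_left)
        also have "\<dots> = \<alpha> * ((\<Sum>k\<in>UNIV. (u i $ k)^2) * (1 / (2 * kP) + d i / (2 * tauQ * (cQ + kQ * d i))))"
          by (simp only: sum_distrib_right)
        also have "\<dots> = g (d i)"
          unfolding uu g_def using True pos cQ1 by (simp add: field_simps)
        finally show ?thesis .
      qed
    qed
    finally show ?thesis .
  qed
  show ?thesis
    unfolding has_h2_norm_sq_def target
    using integral valsum by (simp add: A_def B_def C_def L_def)
qed

end
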